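(* Let $p,q,r\in\mathrm{sylv}_\infty$ with $\mathrm{ev}(p)=\mathrm{ev}(q)\leqslant\mathrm{ev}(r)$. Then $pr=qr$ in $\mathrm{sylv}_\infty$.
   Context: Let $\mathcal{A}=\{1<2<3<\cdots\}$. A right strict binary search tree is a labelled rooted binary tree (labels in $\mathcal{A}$) in which each node's label is $\ge$ every label in its left subtree and $<$ every label in its right subtree. Inserting $a$ into such a tree $T$: if $T$ is empty, create a node labelled $a$; otherwise, with root label $x$, recursively insert $a$ into the right subtree if $a>x$ and into the left subtree otherwise. For $w=w_1\cdots w_k\in\mathcal{A}^*$, $\mathrm{P}(w)$ is obtained from the empty tree by inserting $w_k,\dots,w_1$ in this order. The sylvester monoid $\mathrm{sylv}_\infty$ is $\mathcal{A}^*/{\equiv}$ where $u\equiv v\iff \mathrm{P}(u)=\mathrm{P}(v)$ (a congruence). The evaluation $\mathrm{ev}(u)$ of a word $u$ is the tuple $(|u|_a)_{a\in\mathcal{A}}$, $|u|_a$ being the number of occurrences of $a$ in $u$; equivalent words have the same evaluation, so $\mathrm{ev}$ is defined on $\mathrm{sylv}_\infty$. $\mathrm{ev}(u)\leqslant\mathrm{ev}(v)$ means $|u|_a\le|v|_a$ for every $a$. *)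

theory Defs
  imports "HOL-Library.Tree"
begin

text \<open>Alphabet A = {1 < 2 < 3 < ...}, represented by positive naturals.
  Right strict binary search tree insertion.\<close>

fun bst_insert :: "nat \<Rightarrow> nat tree \<Rightarrow> nat tree" where
  "bst_insert a Leaf = Node Leaf a Leaf"
| "bst_insert a (Node l x r) =
     (if a > x then Node l x (bst_insert a r) else Node (bst_insert a l) x r)"

definition P_sylv :: "nat list \<Rightarrow> nat tree" where
  "P_sylv w = fold bst_insert (rev w) Leaf"

text \<open>Sylvester congruence: u and v represent the same element of sylv_infinity.\<close>
definition sylv_equiv :: "nat list \<Rightarrow> nat list \<Rightarrow> bool" where
  "sylv_equiv u v \<longleftrightarrow> P_sylv u = P_sylv v"

definition ev :: "nat list \<Rightarrow> nat \<Rightarrow> nat" where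
  "ev u = (\<lambda>a. count_list u a)"

end

theory Submission
  imports Defs "HOL-Library.Multiset"
begin

fun bstr :: "nat tree \<Rightarrow> bool" where
  "bstr Leaf = True"
| "bstr (Node l x r) = (bstr l \<and> bstr r \<and> (\<forall>y\<in>set_tree l. y \<le> x) \<and> (\<forall>y\<in>set_tree r. x < y))"

lemma set_ins[simp]: "set_tree (bst_insert a t) = insert a (set_tree t)"
  by (induction t) auto

lemma bstr_ins: "bstr t \<Longrightarrow> bstr (bst_insert a t)"
  by (induction t) auto

lemma comm_gen:
  "bstr t \<Longrightarrow> (a \<in> set_tree t \<or> (\<forall>y\<in>set_tree t. y \<le> a)) \<Longrightarrow>
   (b \<in> set_tree t \<or> (\<forall>y\<in>set_tree t. y \<le> b)) \<Longrightarrow>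
   (a \<notin> set_tree t \<Longrightarrow> b \<notin> set_tree t \<Longrightarrow> a = b) \<Longrightarrow>
   bst_insert a (bst_insert b t) = bst_insert b (bst_insert a t)"
proof (induction t)
  case Leaf
  then show ?case by auto
next
  case (Node l x r)
  show ?case
  proof (cases "a > x")
    case a: True
    show ?thesis
    proof (cases "b > x")
      case b: True
      have "bst_insert a (bst_insert b r) = bst_insert b (bst_insert a r)"
        apply (rule Node.IH(2))
        using Node.prems a b by auto (meson leD)+
      then show ?thesis using a b by simp
    next
      case False
      then show ?thesis using a by simp
    qed
  next
    case a: False
    show ?thesis
    proof (cases "b > x")
      case b: True
      then show ?thesis using a by simp
    next
      case b: False
      have "bst_insert a (bst_insert b l) = bst_insert b (bst_insert a l)"
        apply (rule Node.IH(1))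
        using Node.prems a b by auto
      then show ?thesis using a b by simp
    qed
  qed
qed

lemma comm: "bstr t \<Longrightarrow> a \<in> set_tree t \<Longrightarrow> b \<in> set_tree t \<Longrightarrow>
   bst_insert a (bst_insert b t) = bst_insert b (bst_insert a t)"
  using comm_gen by blast

lemma fold_comm: "bstr t \<Longrightarrow> x \<in> set_tree t \<Longrightarrow> set ys \<subseteq> set_tree t \<Longrightarrow>
  fold bst_insert ys (bst_insert x t) = bst_insert x (fold bst_insert ys t)"
proof (induction ys arbitrary: t)
  case Nil
  then show ?case by simp
next
  case (Cons y ys)
  have "fold bst_insert (y # ys) (bst_insert x t) = fold bst_insert ys (bst_insert y (bst_insert x t))"
    by simp
  also have "\<dots> = fold bst_insert ys (bst_insert x (bst_insert y t))"
    using comm Cons.prems by auto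
  also have "\<dots> = bst_insert x (fold bst_insert ys (bst_insert y t))"
    using Cons.IH[of "bst_insert y t"] Cons.prems bstr_ins by auto
  finally show ?case by simp
qed

lemma fold_perm: "bstr t \<Longrightarrow> set xs \<subseteq> set_tree t \<Longrightarrow> mset xs = mset ys \<Longrightarrow>
  fold bst_insert xs t = fold bst_insert ys t"
proof (induction xs arbitrary: ys t)
  case Nil
  then show ?case by simp
next
  case (Cons x xs)
  have "x \<in> set ys" using Cons.prems(3) by (metis list.set_intros(1) set_mset_mset)
  then obtain ys1 ys2 where ys: "ys = ys1 @ x # ys2" by (meson split_list)
  have sy: "set ys \<subseteq> set_tree t" using Cons.prems by (metis set_mset_mset)
  have "fold bst_insert (x # xs) t = fold bst_insert xs (bst_insert x t)" by simp
  also have "\<dots> = fold bst_insert (ys1 @ ys2) (bst_insert x t)"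
    apply (rule Cons.IH)
    using Cons.prems bstr_ins ys by auto
  also have "\<dots> = fold bst_insert ys2 (fold bst_insert ys1 (bst_insert x t))" by simp
  also have "\<dots> = fold bst_insert ys2 (bst_insert x (fold bst_insert ys1 t))"
    using fold_comm[of t x ys1] Cons.prems sy ys by auto
  also have "\<dots> = fold bst_insert ys t" using ys by simp
  finally show ?case .
qed

lemma fold_set: "set_tree (fold bst_insert xs t) = set xs \<union> set_tree t"
  by (induction xs arbitrary: t) auto

lemma fold_bstr: "bstr t \<Longrightarrow> bstr (fold bst_insert xs t)"
  by (induction xs arbitrary: t) (auto simp: bstr_ins)

theorem lemma4p4:
  fixes p q r :: "nat list"
  assumes "\<forall>a\<in>set p. a \<ge> 1" and "\<forall>a\<in>set q. a \<ge> 1" and "\<forall>a\<in>set r. a \<ge> 1"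
    and "ev p = ev q"
    and "\<forall>a. ev q a \<le> ev r a"
  shows "sylv_equiv (p @ r) (q @ r)"
proof -
  have m: "mset p = mset q"
    using assms(4) by (simp add: multiset_eq_iff count_mset ev_def)
  have s: "set p \<subseteq> set r"
  proof
    fix a assume "a \<in> set p"
    then have "count_list p a > 0" using count_list_0_iff[of p a] by simp
    then have "count_list r a > 0" using assms(4,5) unfolding ev_def
      by (metis gr0I le_zero_eq)
    then show "a \<in> set r" by (metis count_list_0_iff less_irrefl)
  qed
  let ?T = "fold bst_insert (rev r) Leaf"
  have "fold bst_insert (rev p) ?T = fold bst_insert (rev q) ?T"
    apply (rule fold_perm)
    using fold_bstr[of Leaf "rev r"] fold_set[of "rev r" Leaf] s m by auto
  then show ?thesis by (simp add: sylv_equiv_def P_sylv_def)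
qed

end
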